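(* For every integer $k\geq 3$, every extremal square-free word over an alphabet with exactly $k$ letters has length greater than $\left(\frac{5}{4}\right)^{k/4}$.
   Context: A word is a finite sequence of letters. A factor of $W$ is a word $U$ with $W=W_1UW_2$ for some (possibly empty) words $W_1,W_2$. A square is a nonempty word of the form $XX$; a word is square-free if none of its factors is a square. An extension of a word $W$ over an alphabet $\mathbb{A}$ is any word $W_1xW_2$ where $W=W_1W_2$ ($W_1,W_2$ possibly empty) and $x\in\mathbb{A}$. A word $W$ over $\mathbb{A}$ is extremal square-free if $W$ is square-free and every extension of $W$ (over $\mathbb{A}$) contains a square as a factor. *)

theory Defs
  imports Complex_Main
begin

definition is_factor :: "'a list \<Rightarrow> 'a list \<Rightarrow> bool" where
  "is_factor U W \<longleftrightarrow> (\<exists>W1 W2. W = W1 @ U @ W2)"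

definition is_square :: "'a list \<Rightarrow> bool" where
  "is_square U \<longleftrightarrow> (\<exists>X. X \<noteq> [] \<and> U = X @ X)"

definition square_free :: "'a list \<Rightarrow> bool" where
  "square_free W \<longleftrightarrow> \<not> (\<exists>U. is_factor U W \<and> is_square U)"

definition is_extension :: "'a set \<Rightarrow> 'a list \<Rightarrow> 'a list \<Rightarrow> bool" where
  "is_extension A W V \<longleftrightarrow> (\<exists>W1 W2 x. W = W1 @ W2 \<and> x \<in> A \<and> V = W1 @ [x] @ W2)"

definition extremal_square_free :: "'a set \<Rightarrow> 'a list \<Rightarrow> bool" where
  "extremal_square_free A W \<longleftrightarrow>
     set W \<subseteq> A \<and> square_free W \<and>
     (\<forall>V. is_extension A W V \<longrightarrow> (\<exists>U. is_factor U V \<and> is_square U))"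

end

theory Submission
  imports Defs
begin

lemma sq_lemma:
  fixes W :: "'a list"
  assumes "0 < d" "n + 2*d \<le> length W" "\<forall>i<d. W!(n+i) = W!(n+d+i)"
  shows "\<not> square_free W"
proof -
  let ?X = "take d (drop n W)"
  have eq: "take (2*d) (drop n W) = ?X @ ?X"
  proof (rule nth_equalityI)
    show "length (take (2*d) (drop n W)) = length (?X @ ?X)" using assms by simp
  next
    fix i assume "i < length (take (2*d) (drop n W))"
    hence i: "i < 2*d" using assms by simp
    show "take (2*d) (drop n W) ! i = (?X @ ?X) ! i"
    proof (cases "i < d")
      case True thus ?thesis using assms i by (simp add: nth_append)
    next
      case False
      have "i - d < d" using False i by simp
      hence "W!(n+(i-d)) = W!(n+d+(i-d))" using assms(3) by blast
      moreover have "n+(i-d) = n+i-d" "n+d+(i-d) = n+i" using False by auto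
      ultimately show ?thesis using assms i False by (simp add: nth_append)
    qed
  qed
  have "W = take n W @ take (2*d) (drop n W) @ drop (2*d) (drop n W)"
    by (metis append_take_drop_id)
  hence "is_factor (?X @ ?X) W" unfolding is_factor_def using eq by metis
  moreover have "is_square (?X @ ?X)" unfolding is_square_def
    by (rule exI[of _ ?X]) (use assms in auto)
  ultimately show ?thesis unfolding square_free_def by blast
qed

lemma prefix_lemma:
  assumes "extremal_square_free A W" "x \<in> A"
  shows "\<exists>l. 2*l+1 \<le> length W \<and> W!l = x \<and> (\<forall>i<l. W!i = W!(l+1+i))"
proof -
  have "is_extension A W ([] @ [x] @ W)" unfolding is_extension_def using assms(2) by blast
  then obtain U where "is_factor U (x#W)" "is_square U" using assms(1)
    unfolding extremal_square_free_def by auto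
  then obtain W1 W2 X where X: "X \<noteq> []" "x#W = W1 @ (X@X) @ W2"
    unfolding is_factor_def is_square_def by blast
  have sf: "square_free W" using assms(1) unfolding extremal_square_free_def by blast
  show ?thesis
  proof (cases W1)
    case (Cons a W1')
    hence "W = W1' @ (X@X) @ W2" using X by simp
    hence "is_factor (X@X) W" unfolding is_factor_def by blast
    moreover have "is_square (X@X)" unfolding is_square_def using X by blast
    ultimately show ?thesis using sf unfolding square_free_def by blast
  next
    case Nil
    then obtain Y where Y: "X = x#Y" using X by (cases X) auto
    hence W: "W = Y @ x # Y @ W2" using X Nil by simp
    show ?thesis
    proof (intro exI[of _ "length Y"] conjI allI impI)
      show "2 * length Y + 1 \<le> length W" using W by simp
      show "W ! length Y = x" using W by (simp add: nth_append)
      fix i assume "i < length Y"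
      thus "W ! i = W ! (length Y + 1 + i)" using W by (simp add: nth_append)
    qed
  qed
qed

lemma ratio_lemma:
  assumes sf: "square_free W"
    and p: "2*p+1 \<le> length W" "\<forall>i<p. W!i = W!(p+1+i)"
    and q: "2*q+1 \<le> length W" "\<forall>i<q. W!i = W!(q+1+i)"
    and pq: "p < q"
  shows "3*p < 2*q"
proof (rule ccontr)
  assume "\<not> 3*p < 2*q"
  define d where "d = q - p"
  have d: "0 < d" "2*d \<le> p" using pq \<open>\<not> 3*p < 2*q\<close> by (auto simp: d_def)
  have "\<forall>i<d. W!(0+i) = W!(0+d+i)"
  proof (intro allI impI)
    fix i assume i: "i < d"
    have "W!(d+i) = W!(p+1+(d+i))" using p d i by simp
    also have "p+1+(d+i) = q+1+i" using pq by (simp add: d_def)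
    also have "W!(q+1+i) = W!i" using q i pq by (simp add: d_def)
    finally show "W!(0+i) = W!(0+d+i)" by simp
  qed
  moreover have "0 + 2*d \<le> length W" using d p by simp
  ultimately have "\<not> square_free W" using sq_lemma d by blast
  thus False using sf by blast
qed

lemma set_lemma:
  fixes S :: "nat set"
  assumes "finite S"
  shows "S \<noteq> {} \<longrightarrow> (\<forall>p\<in>S. \<forall>q\<in>S. p < q \<longrightarrow> 3*p < 2*q) \<longrightarrow>
     (3/2::real)^(card S - 1) \<le> real (Max S) + 1"
  using assms
proof (induction S rule: finite_linorder_max_induct)
  case empty
  then show ?case by simp
next
  case (insert b S)
  show ?case
  proof (intro impI)
    assume H: "\<forall>p\<in>insert b S. \<forall>q\<in>insert b S. p < q \<longrightarrow> 3*p < 2*q"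
    show "(3/2::real)^(card (insert b S) - 1) \<le> real (Max (insert b S)) + 1"
    proof (cases "S = {}")
      case True then show ?thesis by simp
    next
      case False
      have "Max S < b" using insert False by simp
      hence mx: "Max (insert b S) = b" using insert False
        by (simp add: Max_insert max_def not_le[symmetric])
      have cS: "card (insert b S) = card S + 1" using insert by auto
      have MS: "Max S \<in> S" using insert False by simp
      hence "3 * Max S < 2 * b" using H insert by auto
      hence r: "3 * real (Max S) + 1 \<le> 2 * real b" by linarith
      have IH: "(3/2::real)^(card S - 1) \<le> real (Max S) + 1" using insert False H by blast
      have "card S \<ge> 1" using False insert by (simp add: Suc_leI card_gt_0_iff)
      then have "(3/2::real)^(card (insert b S) - 1) = 3/2 * (3/2)^(card S - 1)"
        using cS by (metis add_diff_cancel_right' power_Suc Suc_diff_1 le_add_diff_inverse2 less_le_trans zero_less_one add.commute)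
      also have "\<dots> \<le> 3/2 * (real (Max S) + 1)" using IH by simp
      also have "\<dots> \<le> real b + 1" using r by simp
      finally show ?thesis using mx by simp
    qed
  qed
qed

theorem mainTheorem2:
  fixes A :: "'a set" and k :: nat and W :: "'a list"
  assumes "k \<ge> 3" and "finite A" and "card A = k"
    and "extremal_square_free A W"
  shows "real (length W) > (5 / 4) powr (real k / 4)"
proof -
  define P where "P x l \<longleftrightarrow> 2*l+1 \<le> length W \<and> W!l = x \<and> (\<forall>i<l. W!i = W!(l+1+i))" for x l
  define g where "g x = (SOME l. P x l)" for x
  have gP: "P x (g x)" if "x \<in> A" for x
    unfolding g_def using prefix_lemma[OF assms(4) that] by (metis P_def someI_ex)
  have inj: "inj_on g A"
    by (rule inj_onI) (metis gP P_def)
  define S where "S = g ` A"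
  have cS: "card S = k" using inj assms by (simp add: S_def card_image)
  have fS: "finite S" using assms by (simp add: S_def)
  have ne: "S \<noteq> {}" using cS assms(1) by auto
  have sf: "square_free W" using assms(4) unfolding extremal_square_free_def by blast
  have pw: "\<forall>p\<in>S. \<forall>q\<in>S. p < q \<longrightarrow> 3*p < 2*q"
  proof (intro ballI impI)
    fix p q assume "p \<in> S" "q \<in> S" "p < q"
    then obtain x y where "x \<in> A" "y \<in> A" "p = g x" "q = g y" by (auto simp: S_def)
    then have "P x p" "P y q" using gP by auto
    then show "3*p < 2*q" using ratio_lemma[OF sf _ _ _ _ \<open>p<q\<close>] unfolding P_def by blast
  qed
  have b1: "(3/2::real)^(k - 1) \<le> real (Max S) + 1" using set_lemma[OF fS] ne pw cS by blast
  have "Max S \<in> S" using fS ne by simp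
  then obtain x where "x \<in> A" "Max S = g x" by (auto simp: S_def)
  hence "2 * Max S + 1 \<le> length W" using gP P_def by auto
  hence b2: "2 * real (Max S) + 1 \<le> real (length W)" by linarith
  have one: "(1::real) \<le> (3/2)^(k-1)" by simp
  have lt: "(5/4::real)^(k-1) < (3/2)^(k-1)"
    using assms(1) by (intro power_strict_mono) auto
  have "(5/4::real) powr (real k / 4) \<le> (5/4) powr (real (k-1))"
    using assms(1) by (intro powr_mono) auto
  also have "\<dots> = (5/4)^(k-1)" by (simp add: powr_realpow)
  finally show ?thesis using lt one b1 b2 by linarith
qed

end
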